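(* Fix $k\ge1$. For every $k$-bounded partition $\lambda$, the image of the dual $k$-Schur function $\mathfrak{S}^{(k)}_\lambda$ in $\mathsf{QSym}^{(k)}$ satisfies $$\mathfrak{S}^{(k)}_\lambda=\sum_{\substack{\alpha\ k\text{-bounded}\\ \lambda(\alpha)=\lambda}}\mathcal{S}^{(k)}_\alpha .$$
   Context: Compositions are finite sequences of positive integers (possibly empty $\emptyset$); $k$-bounded means all parts $\le k$; $\lambda(\alpha)$ is the partition obtained by sorting the parts of $\alpha$. $\mathsf{Sym}^{(k)}$ is the quotient of the ring of symmetric functions $\mathsf{Sym}$ by the ideal generated by the monomial symmetric functions $m_\mu$ with $\mu$ not $k$-bounded; $\mathsf{Sym}_{(k)}=\mathbb{Q}[h_1,\dots,h_k]$; they are paired by $\langle m_\lambda,h_\mu\rangle=\delta_{\lambda,\mu}$ ($\lambda,\mu$ $k$-bounded). $\mathsf{QSym}^{(k)}$ is the quotient of $\mathsf{QSym}$ by the ideal generated by monomial quasi-symmetric functions $M_\alpha$ with some part $>k$; $\mathsf{NSym}_{(k)}$ is the subalgebra of $\mathbb{Q}\langle H_1,H_2,\dots\rangle$ generated by $H_1,\dots,H_k$; they are paired by $\langle M_\alpha,H_\beta\rangle=\delta_{\alpha,\beta}$. The inclusion $\mathsf{Sym}\subset\mathsf{QSym}$ ($m_\mu=\sum_{\lambda(\alpha)=\mu}M_\alpha$) induces a map $\mathsf{Sym}^{(k)}\to\mathsf{QSym}^{(k)}$. $k$-conjugation: hook length of cell $(i,j)$ of $\kappa$ is $\kappa_i-j+\kappa'_j-i+1$;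 a $(k+1)$-core has no cell of hook length $k+1$; $p(\kappa)$ has $i$-th part the number of cells in row $i$ with hook length $\le k$; $p$ is a bijection from $(k+1)$-cores to $k$-bounded partitions with inverse $c$; $\lambda^{\omega_k}=p(c(\lambda)')$. For $k$-bounded $\mu\subseteq\lambda$, $\lambda/\mu$ is a horizontal $k$-strip if no two of its cells share a column, and $\mu^{\omega_k}\subseteq\lambda^{\omega_k}$ with no two cells of $\lambda^{\omega_k}/\mu^{\omega_k}$ in the same row. The $k$-Schur functions $\{s^{(k)}_\lambda\}$ are the basis of $\mathsf{Sym}_{(k)}$ with $s^{(k)}_\emptyset=1$ and $h_i s^{(k)}_\lambda=\sum_\mu s^{(k)}_\mu$ ($1\le i\le k$) over $\mu$ with $\mu/\lambda$ a horizontal $k$-strip of size $i$; the dual $k$-Schur functions $\{\mathfrak{S}^{(k)}_\lambda\}$ form the dual basis of $\mathsf{Sym}^{(k)}$. Box-adding operators: $t_1(\alpha)=[1,\alpha_1,\dots,\alpha_m]$; for $i\ge2$, $t_i(\alpha)$ replaces the leftmost part equal to $i-1$ by $i$ (undefined if none). $\beta//\alpha$ is a horizontal composition strip of size $n$ if $\beta=t_{i_n}\cdots t_{i_1}(\alpha)$ with $1\le i_1<\cdots<i_n$; for $k$-bounded $\alpha,\beta$ it is a horizontal $k$-composition strip if moreover $\lambda(\beta)/\lambda(\alpha)$ is a horizontal $k$-strip. $\{\mathbf{S}^{(k)}_\alpha\}$ is the unique basis of $\mathsf{NSym}_{(k)}$ with $\mathbf{S}^{(k)}_\emptyset=1$ and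 $H_i\mathbf{S}^{(k)}_\alpha=\sum_\beta\mathbf{S}^{(k)}_\beta$ ($1\le i\le k$) over $\beta$ with $\beta//\alpha$ a horizontal $k$-composition strip of size $i$; the quasi-symmetric affine Schur functions $\{\mathcal{S}^{(k)}_\alpha\}$ form the dual basis of $\mathsf{QSym}^{(k)}$. *)

theory Defs
  imports Complex_Main
begin

definition is_partition :: "nat list \<Rightarrow> bool" where
  "is_partition la \<longleftrightarrow> sorted_wrt (\<ge>) la \<and> 0 \<notin> set la"

definition kcomp :: "nat \<Rightarrow> nat list \<Rightarrow> bool" where
  "kcomp k \<alpha> \<longleftrightarrow> set \<alpha> \<subseteq> {1..k}"

definition kbpart :: "nat \<Rightarrow> nat list \<Rightarrow> bool" where
  "kbpart k la \<longleftrightarrow> is_partition la \<and> set la \<subseteq> {1..k}"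

definition lam :: "nat list \<Rightarrow> nat list" where
  "lam \<alpha> = rev (sort \<alpha>)"

definition pt :: "nat list \<Rightarrow> nat \<Rightarrow> nat" where
  "pt \<kappa> i = (if i < length \<kappa> then \<kappa> ! i else 0)"

definition conj :: "nat list \<Rightarrow> nat list" where
  "conj \<kappa> = map (\<lambda>j. card {i. i < length \<kappa> \<and> j < \<kappa> ! i}) [0..<pt \<kappa> 0]"

text \<open>hook length of cell (i,j), 0-indexed: kappa_i - j + kappa'_j - i - 1
  (equal to the 1-indexed formula kappa_i - j + kappa'_j - i + 1)\<close>
definition hook :: "nat list \<Rightarrow> nat \<Rightarrow> nat \<Rightarrow> nat" where
  "hook \<kappa> i j = (pt \<kappa> i - j) + (pt (conj \<kappa>) j - i) - 1"

definition is_core :: "nat \<Rightarrow> nat list \<Rightarrow> bool" where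
  "is_core r \<kappa> \<longleftrightarrow> is_partition \<kappa> \<and>
     (\<forall>i j. i < length \<kappa> \<and> j < \<kappa> ! i \<longrightarrow> hook \<kappa> i j \<noteq> r)"

definition pmap :: "nat \<Rightarrow> nat list \<Rightarrow> nat list" where
  "pmap k \<kappa> = filter (\<lambda>x. 0 < x)
     (map (\<lambda>i. card {j. j < \<kappa> ! i \<and> hook \<kappa> i j \<le> k}) [0..<length \<kappa>])"

definition cmap :: "nat \<Rightarrow> nat list \<Rightarrow> nat list" where
  "cmap k la = (THE \<kappa>. is_core (k + 1) \<kappa> \<and> pmap k \<kappa> = la)"

definition kconj :: "nat \<Rightarrow> nat list \<Rightarrow> nat list" where
  "kconj k la = pmap k (conj (cmap k la))"

definition contained :: "nat list \<Rightarrow> nat list \<Rightarrow> bool" where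
  "contained \<mu> la \<longleftrightarrow> (\<forall>i. pt \<mu> i \<le> pt la i)"

definition hkstrip :: "nat \<Rightarrow> nat list \<Rightarrow> nat list \<Rightarrow> bool" where
  "hkstrip k \<mu> la \<longleftrightarrow> kbpart k \<mu> \<and> kbpart k la \<and> contained \<mu> la \<and>
     (\<forall>i. pt la (Suc i) \<le> pt \<mu> i) \<and>
     contained (kconj k \<mu>) (kconj k la) \<and>
     (\<forall>i. pt (kconj k la) i \<le> pt (kconj k \<mu>) i + 1)"

fun repl_first :: "nat \<Rightarrow> nat \<Rightarrow> nat list \<Rightarrow> nat list option" where
  "repl_first a b [] = None"
| "repl_first a b (x # xs) = (if x = a then Some (b # xs)
      else map_option (\<lambda>ys. x # ys) (repl_first a b xs))"

definition tbox :: "nat \<Rightarrow> nat list \<Rightarrow> nat list option" where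
  "tbox i \<alpha> = (if i = 0 then None else if i = 1 then Some (1 # \<alpha>)
               else repl_first (i - 1) i \<alpha>)"

fun tapply :: "nat list \<Rightarrow> nat list \<Rightarrow> nat list option" where
  "tapply [] \<alpha> = Some \<alpha>"
| "tapply (i # is) \<alpha> = Option.bind (tbox i \<alpha>) (tapply is)"

definition hcstrip :: "nat list \<Rightarrow> nat list \<Rightarrow> nat \<Rightarrow> bool" where
  "hcstrip \<alpha> \<beta> n \<longleftrightarrow> (\<exists>is. length is = n \<and> sorted_wrt (<) is \<and> (\<forall>i\<in>set is. 1 \<le> i)
       \<and> tapply is \<alpha> = Some \<beta>)"

definition hkcstrip :: "nat \<Rightarrow> nat list \<Rightarrow> nat list \<Rightarrow> nat \<Rightarrow> bool" where
  "hkcstrip k \<alpha> \<beta> n \<longleftrightarrow> kcomp k \<alpha> \<and> kcomp k \<beta> \<and> hcstrip \<alpha> \<beta> n \<and>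
     hkstrip k (lam \<alpha>) (lam \<beta>)"

definition fsupp :: "('a \<Rightarrow> rat) \<Rightarrow> 'a set" where
  "fsupp f = {x. f x \<noteq> 0}"

definition fspace :: "'a set \<Rightarrow> ('a \<Rightarrow> rat) set" where
  "fspace I = {f. finite (fsupp f) \<and> fsupp f \<subseteq> I}"

definition lincomb :: "('i \<Rightarrow> 'a \<Rightarrow> rat) \<Rightarrow> ('i \<Rightarrow> rat) \<Rightarrow> 'a \<Rightarrow> rat" where
  "lincomb b c x = (\<Sum>i\<in>fsupp c. c i * b i x)"

definition is_basis :: "'i set \<Rightarrow> ('i \<Rightarrow> 'a \<Rightarrow> rat) \<Rightarrow> ('a \<Rightarrow> rat) set \<Rightarrow> bool" where
  "is_basis I b V \<longleftrightarrow> (\<forall>i\<in>I. b i \<in> V) \<and>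
     (\<forall>f\<in>V. \<exists>c\<in>fspace I. f = lincomb b c) \<and>
     (\<forall>c\<in>fspace I. lincomb b c = (\<lambda>_. 0) \<longrightarrow> c = (\<lambda>_. 0))"

text \<open>pairing <f,g> of coordinate vectors in dual bases (m/h, resp. M/H)\<close>
definition pair :: "('a \<Rightarrow> rat) \<Rightarrow> ('a \<Rightarrow> rat) \<Rightarrow> rat" where
  "pair f g = (\<Sum>x\<in>fsupp f. f x * g x)"

definition is_dual_basis :: "'a set \<Rightarrow> ('a \<Rightarrow> 'a \<Rightarrow> rat) \<Rightarrow> ('a \<Rightarrow> 'a \<Rightarrow> rat) \<Rightarrow> bool" where
  "is_dual_basis I b d \<longleftrightarrow> (\<forall>i\<in>I. d i \<in> fspace I \<and>
     (\<forall>j\<in>I. pair (d i) (b j) = (if i = j then 1 else 0)))"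

text \<open>unit: coordinate vector of 1 = h_empty (resp. H_empty)\<close>
definition one_vec :: "nat list \<Rightarrow> rat" where
  "one_vec x = (if x = [] then 1 else 0)"

text \<open>Sym_(k) = Q[h_1..h_k]; element = coordinates w.r.t. h_mu, mu k-bounded partition.
  Multiplication by h_i: h_i h_nu = h_{lam(i # nu)}.\<close>
definition sym_hmul :: "nat \<Rightarrow> (nat list \<Rightarrow> rat) \<Rightarrow> nat list \<Rightarrow> rat" where
  "sym_hmul i f \<mu> = (\<Sum>\<nu>\<in>{\<nu>. f \<nu> \<noteq> 0 \<and> lam (i # \<nu>) = \<mu>}. f \<nu>)"

text \<open>NSym_(k); element = coordinates w.r.t. H_beta, beta k-bounded composition.
  Left multiplication by H_i: H_i H_beta = H_{i # beta}.\<close>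
definition nsym_hmul :: "nat \<Rightarrow> (nat list \<Rightarrow> rat) \<Rightarrow> nat list \<Rightarrow> rat" where
  "nsym_hmul i F \<gamma> = (case \<gamma> of [] \<Rightarrow> 0 | j # \<beta> \<Rightarrow> if j = i then F \<beta> else 0)"

definition is_kschur :: "nat \<Rightarrow> (nat list \<Rightarrow> nat list \<Rightarrow> rat) \<Rightarrow> bool" where
  "is_kschur k s \<longleftrightarrow> is_basis {la. kbpart k la} s (fspace {la. kbpart k la}) \<and>
     s [] = one_vec \<and>
     (\<forall>i\<in>{1..k}. \<forall>la. kbpart k la \<longrightarrow>
        sym_hmul i (s la) =
        (\<lambda>\<nu>. \<Sum>\<mu>\<in>{\<mu>. hkstrip k la \<mu> \<and> sum_list \<mu> = sum_list la + i}. s \<mu> \<nu>))"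

definition is_ncschur :: "nat \<Rightarrow> (nat list \<Rightarrow> nat list \<Rightarrow> rat) \<Rightarrow> bool" where
  "is_ncschur k S \<longleftrightarrow> is_basis {\<alpha>. kcomp k \<alpha>} S (fspace {\<alpha>. kcomp k \<alpha>}) \<and>
     S [] = one_vec \<and>
     (\<forall>i\<in>{1..k}. \<forall>\<alpha>. kcomp k \<alpha> \<longrightarrow>
        nsym_hmul i (S \<alpha>) =
        (\<lambda>\<gamma>. \<Sum>\<beta>\<in>{\<beta>. hkcstrip k \<alpha> \<beta> i}. S \<beta> \<gamma>))"

text \<open>Sym^(k) element in m-coordinates (k-bounded partitions) mapped to QSym^(k)
  in M-coordinates (k-bounded compositions): m_mu maps to the sum of M_alpha, lam alpha = mu.\<close>
definition sym_to_qsym :: "nat \<Rightarrow> (nat list \<Rightarrow> rat) \<Rightarrow> nat list \<Rightarrow> rat" where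
  "sym_to_qsym k f \<gamma> = (if kcomp k \<gamma> then f (lam \<gamma>) else 0)"

end

theory Submission
  imports Defs "HOL-Library.Multiset"
begin


definition cnt :: "nat \<Rightarrow> nat list \<Rightarrow> nat" where
  "cnt x xs = length (filter (\<lambda>y. x \<le> y) xs)"

lemma cnt_Nil[simp]: "cnt x [] = 0" by (simp add: cnt_def)
lemma cnt_Cons[simp]: "cnt x (y#ys) = (if x \<le> y then Suc (cnt x ys) else cnt x ys)"
  by (simp add: cnt_def)

lemma cnt_mset: "mset xs = mset ys \<Longrightarrow> cnt x xs = cnt x ys"
proof -
  assume "mset xs = mset ys"
  hence "mset (filter (\<lambda>y. x \<le> y) xs) = mset (filter (\<lambda>y. x \<le> y) ys)" by simp
  thus ?thesis unfolding cnt_def by (metis size_mset)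
qed

lemma cnt_anti: "x \<le> y \<Longrightarrow> cnt y xs \<le> cnt x xs"
  by (induction xs) auto

lemma count_cnt: "count (mset xs) x = cnt x xs - cnt (Suc x) xs"
proof (induction xs)
  case Nil then show ?case by simp
next
  case (Cons y ys)
  have "cnt (Suc x) ys \<le> cnt x ys" by (rule cnt_anti) simp
  with Cons show ?case by auto
qed

lemma mset_eq_cnt:
  assumes "0 \<notin> set xs" "0 \<notin> set ys" "\<forall>x\<ge>1. cnt x xs = cnt x ys"
  shows "mset xs = mset ys"
proof (rule multiset_eqI)
  fix x
  show "count (mset xs) x = count (mset ys) x"
  proof (cases "x = 0")
    case True
    then show ?thesis using assms(1,2) by (metis count_eq_zero_iff set_mset_mset)
  next
    case False
    then show ?thesis using assms(3) by (simp add: count_cnt)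
  qed
qed

lemma mset_lam: "mset (lam xs) = mset xs" by (simp add: lam_def)
lemma set_lam: "set (lam xs) = set xs" by (simp add: lam_def)
lemma length_lam: "length (lam xs) = length xs" by (simp add: lam_def)
lemma sum_lam: "sum_list (lam xs) = sum_list xs"
  by (metis mset_lam sum_mset_sum_list)
lemma cnt_lam: "cnt x (lam xs) = cnt x xs" by (rule cnt_mset) (simp add: mset_lam)

lemma lam_mset_eq: "mset xs = mset ys \<Longrightarrow> lam xs = lam ys"
  unfolding lam_def by (metis properties_for_sort mset_sort sorted_sort)

lemma lam_partition: "is_partition mu \<Longrightarrow> lam mu = mu"
proof -
  assume "is_partition mu"
  hence "sorted (rev mu)" unfolding is_partition_def sorted_wrt_rev by simp
  hence "sort mu = rev mu" by (intro properties_for_sort) simp_all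
  thus ?thesis by (simp add: lam_def)
qed

lemma kbpart_lam: "kcomp k a \<Longrightarrow> kbpart k (lam a)"
  unfolding kbpart_def is_partition_def kcomp_def lam_def
  by (auto simp: sorted_wrt_rev)

lemma repl_Some:
  "repl_first a (Suc a) xs = Some ys \<Longrightarrow>
    (\<forall>y. cnt y ys = cnt y xs + (if y = Suc a then 1 else 0)) \<and> sum_list ys = Suc (sum_list xs)
    \<and> length ys = length xs \<and> set ys \<subseteq> insert (Suc a) (set xs)"
proof (induction xs arbitrary: ys)
  case Nil then show ?case by simp
next
  case (Cons x xs)
  show ?case
  proof (cases "x = a")
    case True
    then show ?thesis using Cons.prems by auto
  next
    case False
    then obtain zs where zs: "repl_first a (Suc a) xs = Some zs" "ys = x # zs"
      using Cons.prems by auto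
    from Cons.IH[OF zs(1)] zs(2) show ?thesis by auto
  qed
qed

lemma repl_ex: "a \<in> set xs \<Longrightarrow> \<exists>ys. repl_first a b xs = Some ys"
  by (induction xs) auto

lemma tbox_Some:
  assumes "1 \<le> x" "tbox x a = Some b"
  shows "(\<forall>y\<ge>1. cnt y b = cnt y a + (if y = x then 1 else 0)) \<and> sum_list b = Suc (sum_list a)
    \<and> length b \<le> Suc (length a) \<and> set b \<subseteq> insert x (set a)"
proof (cases "x = 1")
  case True
  then show ?thesis using assms by (auto simp: tbox_def)
next
  case False
  then obtain c where x: "x = Suc c" using assms(1) by (cases x) auto
  then have "repl_first c (Suc c) a = Some b" using assms False by (simp add: tbox_def)
  from repl_Some[OF this] show ?thesis unfolding x by auto
qed

lemma tapply_Some: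
  "sorted_wrt (<) ps \<Longrightarrow> \<forall>x\<in>set ps. 1 \<le> x \<Longrightarrow> tapply ps a = Some b \<Longrightarrow>
    (\<forall>y\<ge>1. cnt y b = cnt y a + (if y \<in> set ps then 1 else 0)) \<and> sum_list b = sum_list a + length ps
    \<and> length b \<le> length a + length ps \<and> set b \<subseteq> set a \<union> set ps"
proof (induction ps arbitrary: a)
  case Nil then show ?case by simp
next
  case (Cons x ps)
  from Cons.prems(3) obtain a' where a': "tbox x a = Some a'" "tapply ps a' = Some b"
    by (cases "tbox x a") auto
  have T: "(\<forall>y\<ge>1. cnt y a' = cnt y a + (if y = x then 1 else 0)) \<and> sum_list a' = Suc (sum_list a)
    \<and> length a' \<le> Suc (length a) \<and> set a' \<subseteq> insert x (set a)"
    using tbox_Some[OF _ a'(1)] Cons.prems(2) by auto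
  have I: "(\<forall>y\<ge>1. cnt y b = cnt y a' + (if y \<in> set ps then 1 else 0)) \<and> sum_list b = sum_list a' + length ps
    \<and> length b \<le> length a' + length ps \<and> set b \<subseteq> set a' \<union> set ps"
    using Cons.IH[OF _ _ a'(2)] Cons.prems(1,2) by auto
  have "x \<notin> set ps" using Cons.prems(1) by auto
  then show ?case using T I by auto
qed

lemma tapply_ex:
  "sorted_wrt (<) ps \<Longrightarrow> \<forall>x\<in>set ps. 1 \<le> x \<Longrightarrow> 0 \<notin> set a \<Longrightarrow>
   \<forall>x\<in>set ps. 2 \<le> x \<longrightarrow> cnt x a < cnt (x - 1) a + (if x - 1 \<in> set ps then 1 else 0) \<Longrightarrow>
   \<exists>b. tapply ps a = Some b"
proof (induction ps arbitrary: a)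
  case Nil then show ?case by simp
next
  case (Cons x ps)
  have x1: "1 \<le> x" using Cons.prems by auto
  have gt: "\<forall>z\<in>set ps. x < z" using Cons.prems(1) by auto
  have "\<exists>a'. tbox x a = Some a'"
  proof (cases "x = 1")
    case True then show ?thesis by (simp add: tbox_def)
  next
    case False
    then have x2: "2 \<le> x" using x1 by auto
    have "x - 1 \<notin> set (x # ps)" using gt x1 by auto
    then have "cnt x a < cnt (x - 1) a" using Cons.prems(4) x2 by auto
    moreover have "count (mset a) (x - 1) = cnt (x - 1) a - cnt x a"
      using count_cnt[of a "x - 1"] x1 by (simp add: Suc_diff_1)
    ultimately have "0 < count (mset a) (x - 1)" by linarith
    hence "x - 1 \<in># mset a" by (simp only: count_greater_zero_iff)
    hence "x - 1 \<in> set a" by simp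
    then show ?thesis using False x1 by (auto simp: tbox_def intro: repl_ex)
  qed
  then obtain a' where a': "tbox x a = Some a'" by blast
  have T: "(\<forall>y\<ge>1. cnt y a' = cnt y a + (if y = x then 1 else 0))"
    "set a' \<subseteq> insert x (set a)"
    using tbox_Some[OF x1 a'] by auto
  have "\<exists>b. tapply ps a' = Some b"
  proof (rule Cons.IH)
    show "sorted_wrt (<) ps" "\<forall>x\<in>set ps. 1 \<le> x" using Cons.prems by auto
    show "0 \<notin> set a'" using T(2) x1 Cons.prems(3) by auto
    show "\<forall>z\<in>set ps. 2 \<le> z \<longrightarrow> cnt z a' < cnt (z - 1) a' + (if z - 1 \<in> set ps then 1 else 0)"
    proof (intro ballI impI)
      fix z assume z: "z \<in> set ps" "2 \<le> z"
      have h: "cnt z a < cnt (z - 1) a + (if z - 1 \<in> set (x # ps) then 1 else 0)"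
        using Cons.prems(4) z by auto
      have zx: "z \<noteq> x" using gt z(1) by auto
      have e1: "cnt z a' = cnt z a" using T(1)[rule_format, of z] z(2) zx by simp
      have e2: "cnt (z - 1) a' = cnt (z - 1) a + (if z - 1 = x then 1 else 0)"
        using T(1)[rule_format, of "z - 1"] z(2) by simp
      show "cnt z a' < cnt (z - 1) a' + (if z - 1 \<in> set ps then 1 else 0)"
      proof (cases "z - 1 = x")
        case True
        then have "z - 1 \<notin> set ps" using gt by auto
        then show ?thesis using h e1 e2 True by simp
      next
        case False
        then show ?thesis using h e1 e2 by simp
      qed
    qed
  qed
  then show ?case using a' by auto
qed

lemma cnt_pt: "1 \<le> x \<Longrightarrow> cnt x r = card {j. x \<le> pt r j}"
proof -
  assume x: "1 \<le> x"
  have "{j. x \<le> pt r j} = {i. i < length r \<and> x \<le> r ! i}"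
    using x by (auto simp: pt_def split: if_splits)
  thus ?thesis by (simp add: cnt_def length_filter_conv_card)
qed

lemma hkstrip_cnt:
  assumes "hkstrip k l m" "1 \<le> x"
  shows "cnt x l \<le> cnt x m \<and> cnt x m \<le> Suc (cnt x l)"
proof -
  let ?L = "{j. x \<le> pt l j}" and ?M = "{j. x \<le> pt m j}"
  have fL: "finite ?L" by (rule finite_subset[of _ "{..<length l}"]) (use assms(2) in \<open>auto simp: pt_def split: if_splits\<close>)
  have fM: "finite ?M" by (rule finite_subset[of _ "{..<length m}"]) (use assms(2) in \<open>auto simp: pt_def split: if_splits\<close>)
  have c: "\<forall>i. pt l i \<le> pt m i" "\<forall>i. pt m (Suc i) \<le> pt l i"
    using assms(1) unfolding hkstrip_def contained_def by auto
  have "?L \<subseteq> ?M" using c(1) by (auto intro: order_trans)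
  hence 1: "card ?L \<le> card ?M" using fM by (rule card_mono[rotated])
  have "?M \<subseteq> insert 0 (Suc ` ?L)"
  proof
    fix j assume "j \<in> ?M"
    then show "j \<in> insert 0 (Suc ` ?L)"
      using c(2) by (cases j) (auto intro: order_trans)
  qed
  hence "card ?M \<le> card (insert 0 (Suc ` ?L))" by (rule card_mono[rotated]) (use fL in auto)
  also have "\<dots> \<le> Suc (card (Suc ` ?L))" using fL by (simp add: card_insert_if)
  also have "\<dots> = Suc (card ?L)" by (simp add: card_image)
  finally show ?thesis using 1 cnt_pt[OF assms(2)] by simp
qed



lemma hkc_forward:
  assumes "hkcstrip k a b i"
  shows "hkstrip k (lam a) (lam b) \<and> sum_list (lam b) = sum_list (lam a) + i \<and> kcomp k b"
proof -
  obtain ps where ps: "length ps = i" "sorted_wrt (<) ps" "\<forall>x\<in>set ps. 1 \<le> x" "tapply ps a = Some b"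
    using assms unfolding hkcstrip_def hcstrip_def by blast
  have "sum_list b = sum_list a + length ps" using tapply_Some[OF ps(2,3,4)] by blast
  then show ?thesis using assms ps(1) unfolding hkcstrip_def by (simp add: sum_lam)
qed

lemma hkc_finite: "finite {b. hkcstrip k a b i}"
proof (rule finite_subset)
  show "{b. hkcstrip k a b i} \<subseteq> {xs. set xs \<subseteq> {1..k} \<and> length xs \<le> length a + i}"
  proof
    fix b assume "b \<in> {b. hkcstrip k a b i}"
    then have h: "hkcstrip k a b i" by simp
    obtain ps where ps: "length ps = i" "sorted_wrt (<) ps" "\<forall>x\<in>set ps. 1 \<le> x" "tapply ps a = Some b"
      using h unfolding hkcstrip_def hcstrip_def by blast
    have "length b \<le> length a + length ps" using tapply_Some[OF ps(2,3,4)] by blast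
    then show "b \<in> {xs. set xs \<subseteq> {1..k} \<and> length xs \<le> length a + i}"
      using h ps(1) unfolding hkcstrip_def kcomp_def by simp
  qed
  show "finite {xs. set xs \<subseteq> {1..k} \<and> length xs \<le> length a + i}"
    by (rule finite_lists_length_le) simp
qed

lemma hkc_inj:
  assumes "hkcstrip k a b i" "hkcstrip k a b' i" "lam b = lam b'"
  shows "b = b'"
proof -
  obtain ps where ps: "sorted_wrt (<) ps" "\<forall>x\<in>set ps. 1 \<le> x" "tapply ps a = Some b"
    using assms(1) unfolding hkcstrip_def hcstrip_def by blast
  obtain qs where qs: "sorted_wrt (<) qs" "\<forall>x\<in>set qs. 1 \<le> x" "tapply qs a = Some b'"
    using assms(2) unfolding hkcstrip_def hcstrip_def by blast
  have cp: "\<forall>y\<ge>1. cnt y b = cnt y a + (if y \<in> set ps then 1 else 0)" using tapply_Some[OF ps] by blast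
  have cq: "\<forall>y\<ge>1. cnt y b' = cnt y a + (if y \<in> set qs then 1 else 0)" using tapply_Some[OF qs] by blast
  have "mset b = mset b'" by (metis assms(3) mset_lam)
  then have cc: "\<And>y. cnt y b = cnt y b'" by (rule cnt_mset)
  have "set ps = set qs"
  proof (intro set_eqI iffI)
    fix y assume y: "y \<in> set ps"
    have y1: "1 \<le> y" using ps(2) y by blast
    have "cnt y a + (if y \<in> set ps then 1 else 0) = cnt y a + (if y \<in> set qs then 1 else 0)"
      using cp[rule_format, OF y1] cq[rule_format, OF y1] cc[of y] by metis
    then show "y \<in> set qs" using y by (simp split: if_splits)
  next
    fix y assume y: "y \<in> set qs"
    have y1: "1 \<le> y" using qs(2) y by blast
    have "cnt y a + (if y \<in> set ps then 1 else 0) = cnt y a + (if y \<in> set qs then 1 else 0)"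
      using cp[rule_format, OF y1] cq[rule_format, OF y1] cc[of y] by metis
    then show "y \<in> set ps" using y by (simp split: if_splits)
  qed
  then have "ps = qs" using strict_sorted_equal[OF ps(1) qs(1)] by simp
  then show ?thesis using ps(3) qs(3) by simp
qed

lemma hkc_surj:
  assumes a: "kcomp k a" and h: "hkstrip k (lam a) m" and sm: "sum_list m = sum_list (lam a) + i"
  shows "\<exists>b. hkcstrip k a b i \<and> lam b = m"
proof -
  have km: "kbpart k m" using h unfolding hkstrip_def by simp
  have hc: "\<And>x. 1 \<le> x \<Longrightarrow> cnt x a \<le> cnt x m \<and> cnt x m \<le> Suc (cnt x a)"
    using hkstrip_cnt[OF h] by (simp add: cnt_lam)
  define I where "I = {x. 1 \<le> x \<and> cnt x m = Suc (cnt x a)}"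
  have I_sub: "I \<subseteq> {1..k}"
  proof
    fix x assume "x \<in> I"
    then have x: "1 \<le> x" "0 < cnt x m" unfolding I_def by auto
    then have "filter (\<lambda>y. x \<le> y) m \<noteq> []" unfolding cnt_def by auto
    then obtain y where "y \<in> set m" "x \<le> y" by (auto simp: filter_empty_conv)
    then show "x \<in> {1..k}" using km x(1) unfolding kbpart_def by auto
  qed
  then have fI: "finite I" by (rule finite_subset) simp
  define ps where "ps = sorted_list_of_set I"
  have ps: "sorted_wrt (<) ps" "set ps = I" using fI unfolding ps_def by auto
  have ps1: "\<forall>x\<in>set ps. 1 \<le> x" using ps(2) unfolding I_def by auto
  have cm: "cnt y m = cnt y a + (if y \<in> I then 1 else 0)" if y: "1 \<le> y" for y
  proof (cases "y \<in> I")
    case True then show ?thesis unfolding I_def by simp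
  next
    case False
    then have "cnt y m \<noteq> Suc (cnt y a)" using y unfolding I_def by simp
    then show ?thesis using hc[OF y] False by simp
  qed
  have a0: "0 \<notin> set a" using a unfolding kcomp_def by auto
  have "\<exists>b. tapply ps a = Some b"
  proof (rule tapply_ex[OF ps(1) ps1 a0], intro ballI impI)
    fix x assume x: "x \<in> set ps" "2 \<le> x"
    have "cnt x m \<le> cnt (x - 1) m" by (rule cnt_anti) simp
    moreover have "cnt x m = Suc (cnt x a)" using x ps(2) unfolding I_def by auto
    moreover have "cnt (x - 1) m = cnt (x - 1) a + (if x - 1 \<in> I then 1 else 0)"
      using cm[of "x - 1"] x(2) by simp
    ultimately show "cnt x a < cnt (x - 1) a + (if x - 1 \<in> set ps then 1 else 0)"
      using ps(2) by simp
  qed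
  then obtain b where b: "tapply ps a = Some b" by blast
  have T: "(\<forall>y\<ge>1. cnt y b = cnt y a + (if y \<in> set ps then 1 else 0)) \<and> sum_list b = sum_list a + length ps
    \<and> set b \<subseteq> set a \<union> set ps" using tapply_Some[OF ps(1) ps1 b] by blast
  have b0: "0 \<notin> set b" using T a0 ps1 by auto
  have m0: "0 \<notin> set m" using km unfolding kbpart_def by auto
  have "mset b = mset m"
    by (rule mset_eq_cnt[OF b0 m0]) (use T cm ps(2) in auto)
  then have lb: "lam b = m" using lam_mset_eq[of b m] lam_partition km unfolding kbpart_def by simp
  have sb: "sum_list b = sum_list m" by (metis \<open>mset b = mset m\<close> sum_mset_sum_list)
  have len: "length ps = i" using T sb sm by (simp add: sum_lam)
  have "set b = set m" using \<open>mset b = mset m\<close> by (rule mset_eq_setD)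
  then have kb: "kcomp k b" using km unfolding kcomp_def kbpart_def by simp
  have "hcstrip a b i"
    unfolding hcstrip_def using ps(1) ps1 b len by blast
  then have "hkcstrip k a b i"
    unfolding hkcstrip_def using a kb h lb by simp
  then show ?thesis using lb by blast
qed

lemma hkc_bij:
  assumes "kcomp k a"
  shows "bij_betw lam {b. hkcstrip k a b i} {m. hkstrip k (lam a) m \<and> sum_list m = sum_list (lam a) + i}"
  unfolding bij_betw_def
proof
  show "inj_on lam {b. hkcstrip k a b i}" by (rule inj_onI) (auto intro: hkc_inj)
  show "lam ` {b. hkcstrip k a b i} = {m. hkstrip k (lam a) m \<and> sum_list m = sum_list (lam a) + i}"
  proof
    show "lam ` {b. hkcstrip k a b i} \<subseteq> {m. hkstrip k (lam a) m \<and> sum_list m = sum_list (lam a) + i}"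
      using hkc_forward by blast
    show "{m. hkstrip k (lam a) m \<and> sum_list m = sum_list (lam a) + i} \<subseteq> lam ` {b. hkcstrip k a b i}"
      using hkc_surj[OF assms] by blast
  qed
qed



definition E :: "'a \<Rightarrow> 'a \<Rightarrow> rat" where "E a = (\<lambda>x. if x = a then 1 else 0)"
definition ind :: "'a set \<Rightarrow> 'a \<Rightarrow> rat" where "ind S = (\<lambda>x. if x \<in> S then 1 else 0)"

lemma fsupp_E[simp]: "fsupp (E a) = {a}" by (auto simp: fsupp_def E_def)
lemma fsupp_ind[simp]: "fsupp (ind S) = S" by (auto simp: fsupp_def ind_def)

lemma sum_delta1:
  assumes "finite F" "\<And>x. x \<notin> F \<Longrightarrow> f x = 0"
  shows "(\<Sum>x\<in>F. f x * (if x = a then 1 else 0)) = (f a :: rat)"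
proof -
  have "(\<Sum>x\<in>F. f x * (if x = a then 1 else 0)) = (\<Sum>x\<in>F. if x = a then f x else 0)"
    by (rule sum.cong) auto
  also have "\<dots> = (if a \<in> F then f a else 0)" using assms(1) by (rule sum.delta)
  also have "\<dots> = f a" using assms(2) by auto
  finally show ?thesis .
qed

lemma sum_delta2:
  assumes "finite F" "\<And>x. x \<notin> F \<Longrightarrow> f x = 0"
  shows "(\<Sum>x\<in>F. f x * (if a = x then 1 else 0)) = (f a :: rat)"
proof -
  have "(\<Sum>x\<in>F. f x * (if a = x then 1 else 0)) = (\<Sum>x\<in>F. f x * (if x = a then 1 else 0))"
    by (rule sum.cong) auto
  also have "\<dots> = f a" using assms by (rule sum_delta1)
  finally show ?thesis .
qed

lemma lincomb_E: "lincomb b (E a) = b a"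
  unfolding lincomb_def fsupp_E by (rule ext) (simp add: E_def)

lemma lincomb_ind: "lincomb b (ind S) = (\<lambda>x. \<Sum>i\<in>S. b i x)"
  unfolding lincomb_def fsupp_ind by (rule ext) (simp add: ind_def)

lemma E_fspace: "a \<in> I \<Longrightarrow> E a \<in> fspace I" by (simp add: fspace_def)
lemma ind_fspace: "finite S \<Longrightarrow> S \<subseteq> I \<Longrightarrow> ind S \<in> fspace I" by (simp add: fspace_def)

lemma sum_fsupp_superset:
  assumes "finite S" "fsupp c \<subseteq> S"
  shows "(\<Sum>i\<in>fsupp c. c i * f i) = (\<Sum>i\<in>S. c i * f i)"
  by (rule sum.mono_neutral_left) (use assms in \<open>auto simp: fsupp_def\<close>)

lemma lincomb_superset:
  "finite S \<Longrightarrow> fsupp c \<subseteq> S \<Longrightarrow> lincomb b c x = (\<Sum>i\<in>S. c i * b i x)"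
  unfolding lincomb_def by (rule sum_fsupp_superset)

lemma pair_superset:
  "finite S \<Longrightarrow> fsupp f \<subseteq> S \<Longrightarrow> pair f g = (\<Sum>x\<in>S. f x * g x)"
  unfolding pair_def by (rule sum_fsupp_superset)

lemma fsupp_lincomb: "fsupp (lincomb b c) \<subseteq> (\<Union>i\<in>fsupp c. fsupp (b i))"
proof
  fix x assume "x \<in> fsupp (lincomb b c)"
  then have "(\<Sum>i\<in>fsupp c. c i * b i x) \<noteq> 0" by (simp add: fsupp_def lincomb_def)
  then obtain i where "i \<in> fsupp c" "c i * b i x \<noteq> 0" by (meson sum.not_neutral_contains_not_neutral)
  then show "x \<in> (\<Union>i\<in>fsupp c. fsupp (b i))" by (auto simp: fsupp_def)
qed

lemma finite_fsupp_lincomb: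
  "finite (fsupp c) \<Longrightarrow> (\<forall>i\<in>fsupp c. finite (fsupp (b i))) \<Longrightarrow> finite (fsupp (lincomb b c))"
  by (rule finite_subset[OF fsupp_lincomb]) auto

lemma lincomb_fspace:
  "finite (fsupp c) \<Longrightarrow> (\<forall>i\<in>fsupp c. b i \<in> fspace I) \<Longrightarrow> lincomb b c \<in> fspace I"
proof -
  assume a: "finite (fsupp c)" "\<forall>i\<in>fsupp c. b i \<in> fspace I"
  have "fsupp (lincomb b c) \<subseteq> I" using fsupp_lincomb[of b c] a(2) unfolding fspace_def by blast
  moreover have "finite (fsupp (lincomb b c))"
    using finite_fsupp_lincomb[of c b] a unfolding fspace_def by blast
  ultimately show ?thesis unfolding fspace_def by blast
qed

lemma pair_lincomb_right: "pair f (lincomb b c) = (\<Sum>i\<in>fsupp c. c i * pair f (b i))"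
proof -
  have "pair f (lincomb b c) = (\<Sum>x\<in>fsupp f. \<Sum>i\<in>fsupp c. f x * (c i * b i x))"
    by (simp add: pair_def lincomb_def sum_distrib_left)
  also have "\<dots> = (\<Sum>i\<in>fsupp c. \<Sum>x\<in>fsupp f. f x * (c i * b i x))" by (rule sum.swap)
  also have "\<dots> = (\<Sum>i\<in>fsupp c. c i * pair f (b i))"
    by (simp add: pair_def sum_distrib_left mult.left_commute)
  finally show ?thesis .
qed

lemma pair_lincomb_left:
  assumes "finite (fsupp c)" "\<forall>i\<in>fsupp c. finite (fsupp (b i))"
  shows "pair (lincomb b c) g = (\<Sum>i\<in>fsupp c. c i * pair (b i) g)"
proof -
  let ?S = "\<Union>i\<in>fsupp c. fsupp (b i)"
  have fS: "finite ?S" using assms by auto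
  have "pair (lincomb b c) g = (\<Sum>x\<in>?S. lincomb b c x * g x)"
    by (rule pair_superset[OF fS fsupp_lincomb])
  also have "\<dots> = (\<Sum>x\<in>?S. \<Sum>i\<in>fsupp c. c i * (b i x * g x))"
    by (simp add: lincomb_def sum_distrib_right mult.assoc)
  also have "\<dots> = (\<Sum>i\<in>fsupp c. c i * (\<Sum>x\<in>?S. b i x * g x))"
    by (subst sum.swap) (simp add: sum_distrib_left)
  also have "\<dots> = (\<Sum>i\<in>fsupp c. c i * pair (b i) g)"
  proof (rule sum.cong[OF refl])
    fix i assume "i \<in> fsupp c"
    then have "pair (b i) g = (\<Sum>x\<in>?S. b i x * g x)" by (intro pair_superset[OF fS]) auto
    then show "c i * (\<Sum>x\<in>?S. b i x * g x) = c i * pair (b i) g" by simp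
  qed
  finally show ?thesis .
qed

lemma pair_E_right: "finite (fsupp f) \<Longrightarrow> pair f (E a) = f a"
  unfolding pair_def E_def by (rule sum_delta1) (auto simp: fsupp_def)

lemma pair_E_left: "pair (E a) g = g a"
  unfolding pair_def fsupp_E by (simp add: E_def)

lemma lincomb_self: "finite (fsupp f) \<Longrightarrow> lincomb E f = f"
  unfolding lincomb_def E_def by (rule ext, rule sum_delta2) (auto simp: fsupp_def)

lemma lincomb_cong: "(\<And>i. i \<in> fsupp c \<Longrightarrow> b i = b' i) \<Longrightarrow> lincomb b c = lincomb b' c"
  unfolding lincomb_def by (rule ext) (rule sum.cong, auto)

lemma lincomb_assoc:
  assumes "finite (fsupp c)" "\<forall>j\<in>fsupp c. finite (fsupp (d j))"
  shows "lincomb b (\<lambda>t. \<Sum>j\<in>fsupp c. c j * d j t) = lincomb (\<lambda>j. lincomb b (d j)) c"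
proof (rule ext)
  fix x
  let ?S = "\<Union>j\<in>fsupp c. fsupp (d j)"
  have fS: "finite ?S" using assms by auto
  have sub: "fsupp (\<lambda>t. \<Sum>j\<in>fsupp c. c j * d j t) \<subseteq> ?S"
  proof
    fix t assume "t \<in> fsupp (\<lambda>t. \<Sum>j\<in>fsupp c. c j * d j t)"
    then have "(\<Sum>j\<in>fsupp c. c j * d j t) \<noteq> 0" by (simp add: fsupp_def)
    then obtain j where "j \<in> fsupp c" "c j * d j t \<noteq> 0" by (meson sum.not_neutral_contains_not_neutral)
    then show "t \<in> ?S" by (auto simp: fsupp_def)
  qed
  have "lincomb b (\<lambda>t. \<Sum>j\<in>fsupp c. c j * d j t) x = (\<Sum>t\<in>?S. (\<Sum>j\<in>fsupp c. c j * d j t) * b t x)"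
    by (rule lincomb_superset[OF fS sub])
  also have "\<dots> = (\<Sum>j\<in>fsupp c. c j * (\<Sum>t\<in>?S. d j t * b t x))"
    by (simp add: sum_distrib_right sum_distrib_left mult.assoc sum.swap[of _ ?S])
  also have "\<dots> = (\<Sum>j\<in>fsupp c. c j * lincomb b (d j) x)"
  proof (rule sum.cong[OF refl])
    fix j assume "j \<in> fsupp c"
    then have "lincomb b (d j) x = (\<Sum>t\<in>?S. d j t * b t x)" by (intro lincomb_superset[OF fS]) auto
    then show "c j * (\<Sum>t\<in>?S. d j t * b t x) = c j * lincomb b (d j) x" by simp
  qed
  also have "\<dots> = lincomb (\<lambda>j. lincomb b (d j)) c x" by (simp add: lincomb_def)
  finally show "lincomb b (\<lambda>t. \<Sum>j\<in>fsupp c. c j * d j t) x = lincomb (\<lambda>j. lincomb b (d j)) c x" .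
qed

definition coef :: "'a set \<Rightarrow> ('a \<Rightarrow> 'a \<Rightarrow> rat) \<Rightarrow> ('a \<Rightarrow> rat) \<Rightarrow> 'a \<Rightarrow> rat" where
  "coef I d F = (\<lambda>j. if j \<in> I then pair (d j) F else 0)"

lemma coef_lincomb:
  assumes "is_dual_basis I b d" "c \<in> fspace I"
  shows "coef I d (lincomb b c) = c"
proof (rule ext)
  fix j
  have fc: "finite (fsupp c)" "fsupp c \<subseteq> I" using assms(2) by (auto simp: fspace_def)
  show "coef I d (lincomb b c) j = c j"
  proof (cases "j \<in> I")
    case True
    have "pair (d j) (lincomb b c) = (\<Sum>i\<in>fsupp c. c i * pair (d j) (b i))" by (rule pair_lincomb_right)
    also have "\<dots> = (\<Sum>i\<in>fsupp c. c i * (if j = i then 1 else 0))"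
      using assms(1) True fc(2) unfolding is_dual_basis_def by (intro sum.cong) auto
    also have "\<dots> = c j" using fc(1) by (rule sum_delta2) (auto simp: fsupp_def)
    finally show ?thesis using True by (simp add: coef_def)
  next
    case False
    then have "c j = 0" using fc(2) by (auto simp: fsupp_def)
    then show ?thesis using False by (simp add: coef_def)
  qed
qed

lemma coef_repr:
  assumes "is_basis I b (fspace I)" "is_dual_basis I b d" "F \<in> fspace I"
  shows "coef I d F \<in> fspace I \<and> F = lincomb b (coef I d F)"
proof -
  obtain c where c: "c \<in> fspace I" "F = lincomb b c" using assms(1,3) unfolding is_basis_def by blast
  then show ?thesis using coef_lincomb[OF assms(2) c(1)] by simp
qed



definition chi :: "(nat list \<Rightarrow> rat) \<Rightarrow> nat list \<Rightarrow> rat" where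
  "chi F = (\<lambda>m. pair F (\<lambda>g. E (lam g) m))"

lemma chi_E: "chi (E g) = E (lam g)"
  by (rule ext) (simp add: chi_def pair_E_left)

lemma chi_lincomb:
  "finite (fsupp c) \<Longrightarrow> \<forall>i\<in>fsupp c. finite (fsupp (b i)) \<Longrightarrow> chi (lincomb b c) = lincomb (\<lambda>i. chi (b i)) c"
  by (rule ext) (simp add: chi_def pair_lincomb_left lincomb_def)

lemma sym_hmul_pair:
  assumes "finite (fsupp f)"
  shows "sym_hmul i f = (\<lambda>m. pair f (\<lambda>n. E (lam (i#n)) m))"
proof (rule ext)
  fix m
  have "{n. f n \<noteq> 0 \<and> lam (i#n) = m} = {n \<in> fsupp f. lam (i#n) = m}" by (auto simp: fsupp_def)
  then have "sym_hmul i f m = (\<Sum>n\<in>{n \<in> fsupp f. lam (i#n) = m}. f n)" by (simp add: sym_hmul_def)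
  also have "\<dots> = (\<Sum>n\<in>fsupp f. if lam (i#n) = m then f n else 0)" by (rule sum.inter_filter[OF assms])
  also have "\<dots> = pair f (\<lambda>n. E (lam (i#n)) m)" unfolding pair_def E_def by (rule sum.cong) auto
  finally show "sym_hmul i f m = pair f (\<lambda>n. E (lam (i#n)) m)" .
qed

lemma sym_hmul_lincomb:
  assumes "finite (fsupp c)" "\<forall>j\<in>fsupp c. finite (fsupp (b j))"
  shows "sym_hmul i (lincomb b c) = lincomb (\<lambda>j. sym_hmul i (b j)) c"
proof -
  have "sym_hmul i (lincomb b c) = (\<lambda>m. pair (lincomb b c) (\<lambda>n. E (lam (i#n)) m))"
    by (rule sym_hmul_pair[OF finite_fsupp_lincomb[OF assms]])
  also have "\<dots> = lincomb (\<lambda>j. (\<lambda>m. pair (b j) (\<lambda>n. E (lam (i#n)) m))) c"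
    by (rule ext) (simp add: pair_lincomb_left[OF assms] lincomb_def)
  also have "\<dots> = lincomb (\<lambda>j. sym_hmul i (b j)) c"
    by (rule lincomb_cong) (use assms(2) sym_hmul_pair in auto)
  finally show ?thesis .
qed

lemma sym_hmul_E: "sym_hmul i (E n) = E (lam (i#n))"
  by (simp add: sym_hmul_pair pair_E_left)

lemma nsym_hmul_lincomb: "nsym_hmul i (lincomb b c) = lincomb (\<lambda>j. nsym_hmul i (b j)) c"
  by (rule ext) (simp add: nsym_hmul_def lincomb_def split: list.split)

lemma nsym_hmul_E: "nsym_hmul i (E g) = E (i#g)"
  by (rule ext) (simp add: nsym_hmul_def E_def split: list.split)

lemma lam_Cons_lam: "lam (i # lam g) = lam (i # g)"
  by (rule lam_mset_eq) (simp add: mset_lam)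

lemma chi_nsym:
  assumes "finite (fsupp F)"
  shows "chi (nsym_hmul i F) = sym_hmul i (chi F)"
proof -
  have F: "F = lincomb E F" using lincomb_self[OF assms] by simp
  have "chi (nsym_hmul i F) = chi (lincomb (\<lambda>g. E (i#g)) F)"
    by (subst F) (simp add: nsym_hmul_lincomb nsym_hmul_E)
  also have "\<dots> = lincomb (\<lambda>g. E (lam (i#g))) F"
    by (simp add: chi_lincomb assms chi_E)
  also have "\<dots> = lincomb (\<lambda>g. sym_hmul i (E (lam g))) F"
    by (simp add: sym_hmul_E lam_Cons_lam)
  also have "\<dots> = sym_hmul i (lincomb (\<lambda>g. E (lam g)) F)"
    by (rule sym_hmul_lincomb[symmetric]) (simp_all add: assms)
  also have "lincomb (\<lambda>g. E (lam g)) F = chi F"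
    by (subst (2) F) (simp add: chi_lincomb assms chi_E)
  finally show ?thesis .
qed

lemma sum_fspace:
  assumes "finite J" "\<forall>j\<in>J. d j \<in> fspace I"
  shows "(\<lambda>t. \<Sum>j\<in>J. c j * d j t) \<in> fspace I"
proof -
  have sub: "fsupp (\<lambda>t. \<Sum>j\<in>J. c j * d j t) \<subseteq> (\<Union>j\<in>J. fsupp (d j))"
  proof
    fix t assume "t \<in> fsupp (\<lambda>t. \<Sum>j\<in>J. c j * d j t)"
    then have "(\<Sum>j\<in>J. c j * d j t) \<noteq> 0" by (simp add: fsupp_def)
    then obtain j where "j \<in> J" "c j * d j t \<noteq> 0" by (meson sum.not_neutral_contains_not_neutral)
    then show "t \<in> (\<Union>j\<in>J. fsupp (d j))" by (auto simp: fsupp_def)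
  qed
  have "(\<Union>j\<in>J. fsupp (d j)) \<subseteq> I" "finite (\<Union>j\<in>J. fsupp (d j))"
    using assms by (auto simp: fspace_def)
  with sub show ?thesis unfolding fspace_def by (auto intro: finite_subset)
qed

lemma one_vec_E: "one_vec = E []" by (rule ext) (simp add: one_vec_def E_def)

locale setting =
  fixes k :: nat and s dS NS QS :: "nat list \<Rightarrow> nat list \<Rightarrow> rat"
  assumes ks: "is_kschur k s" and dk: "is_dual_basis {la. kbpart k la} s dS"
    and nk: "is_ncschur k NS" and dn: "is_dual_basis {a. kcomp k a} NS QS"
begin

lemma NS_basis: "is_basis {a. kcomp k a} NS (fspace {a. kcomp k a})"
  using nk unfolding is_ncschur_def by simp

lemma NS_fspace: "kcomp k a \<Longrightarrow> NS a \<in> fspace {a. kcomp k a}"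
  using NS_basis unfolding is_basis_def by simp

lemma s_fspace: "kbpart k m \<Longrightarrow> s m \<in> fspace {la. kbpart k la}"
  using ks unfolding is_kschur_def is_basis_def by simp

lemma fin_s: "kbpart k m \<Longrightarrow> finite (fsupp (s m))"
  using s_fspace unfolding fspace_def by simp

lemma NS_pieri: "i \<in> {1..k} \<Longrightarrow> kcomp k a \<Longrightarrow>
  nsym_hmul i (NS a) = (\<lambda>g. \<Sum>b\<in>{b. hkcstrip k a b i}. NS b g)"
  using nk unfolding is_ncschur_def by blast

lemma s_pieri: "i \<in> {1..k} \<Longrightarrow> kbpart k la \<Longrightarrow>
  sym_hmul i (s la) = (\<lambda>n. \<Sum>m\<in>{m. hkstrip k la m \<and> sum_list m = sum_list la + i}. s m n)"
  using ks unfolding is_kschur_def by blast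

definition sig :: "(nat list \<Rightarrow> rat) \<Rightarrow> nat list \<Rightarrow> rat" where
  "sig F = lincomb (\<lambda>b. s (lam b)) (coef {a. kcomp k a} QS F)"

lemma sig_NSl: "c \<in> fspace {a. kcomp k a} \<Longrightarrow> sig (lincomb NS c) = lincomb (\<lambda>b. s (lam b)) c"
  unfolding sig_def using coef_lincomb[OF dn] by simp

lemma sig_lincomb:
  assumes fc: "finite (fsupp c)" and bA: "\<forall>j\<in>fsupp c. b j \<in> fspace {a. kcomp k a}"
  shows "sig (lincomb b c) = lincomb (\<lambda>j. sig (b j)) c"
proof -
  define cj where "cj j = coef {a. kcomp k a} QS (b j)" for j
  have rep: "cj j \<in> fspace {a. kcomp k a} \<and> b j = lincomb NS (cj j)" if "j \<in> fsupp c" for j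
    using coef_repr[OF NS_basis dn] bA that unfolding cj_def by blast
  have fcj: "\<forall>j\<in>fsupp c. finite (fsupp (cj j))" using rep unfolding fspace_def by blast
  have "lincomb b c = lincomb (\<lambda>j. lincomb NS (cj j)) c" by (rule lincomb_cong) (use rep in auto)
  also have "\<dots> = lincomb NS (\<lambda>t. \<Sum>j\<in>fsupp c. c j * cj j t)"
    by (rule lincomb_assoc[symmetric, OF fc fcj])
  finally have L: "lincomb b c = lincomb NS (\<lambda>t. \<Sum>j\<in>fsupp c. c j * cj j t)" .
  have C: "(\<lambda>t. \<Sum>j\<in>fsupp c. c j * cj j t) \<in> fspace {a. kcomp k a}"
    by (rule sum_fspace[OF fc]) (use rep in auto)
  have "sig (lincomb b c) = lincomb (\<lambda>b. s (lam b)) (\<lambda>t. \<Sum>j\<in>fsupp c. c j * cj j t)"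
    unfolding L by (rule sig_NSl[OF C])
  also have "\<dots> = lincomb (\<lambda>j. lincomb (\<lambda>b. s (lam b)) (cj j)) c"
    by (rule lincomb_assoc[OF fc fcj])
  also have "\<dots> = lincomb (\<lambda>j. sig (b j)) c"
    by (rule lincomb_cong) (use rep sig_NSl in metis)
  finally show ?thesis .
qed

lemma sig_NS: "kcomp k a \<Longrightarrow> sig (NS a) = s (lam a)"
  using sig_NSl[OF E_fspace[of a]] by (simp add: lincomb_E)

lemma sig_hmul:
  assumes F: "F \<in> fspace {a. kcomp k a}" and i: "i \<in> {1..k}"
  shows "sig (nsym_hmul i F) = sym_hmul i (sig F)"
proof -
  define c where "c = coef {a. kcomp k a} QS F"
  have c: "c \<in> fspace {a. kcomp k a}" "F = lincomb NS c"
    using coef_repr[OF NS_basis dn F] unfolding c_def by auto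
  have fc: "finite (fsupp c)" "fsupp c \<subseteq> {a. kcomp k a}" using c(1) unfolding fspace_def by auto
  have indA: "ind {b. hkcstrip k a b i} \<in> fspace {a. kcomp k a}" for a
    by (rule ind_fspace[OF hkc_finite]) (auto simp: hkcstrip_def)
  have hNS: "nsym_hmul i (NS a) = lincomb NS (ind {b. hkcstrip k a b i})" if "a \<in> fsupp c" for a
  proof -
    have "kcomp k a" using fc(2) that by auto
    then show ?thesis by (simp add: NS_pieri[OF i] lincomb_ind)
  qed
  have in1: "lincomb NS (ind {b. hkcstrip k a b i}) \<in> fspace {a. kcomp k a}" for a
    by (rule lincomb_fspace) (use hkc_finite NS_fspace in \<open>auto simp: hkcstrip_def\<close>)
  have "nsym_hmul i F = lincomb (\<lambda>a. lincomb NS (ind {b. hkcstrip k a b i})) c"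
    unfolding c(2) nsym_hmul_lincomb by (rule lincomb_cong) (rule hNS)
  then have "sig (nsym_hmul i F) = lincomb (\<lambda>a. sig (lincomb NS (ind {b. hkcstrip k a b i}))) c"
    using sig_lincomb[OF fc(1)] in1 by simp
  also have "\<dots> = lincomb (\<lambda>a. lincomb (\<lambda>b. s (lam b)) (ind {b. hkcstrip k a b i})) c"
    using sig_NSl[OF indA] by simp
  also have "\<dots> = lincomb (\<lambda>a. (\<lambda>n. \<Sum>b\<in>{b. hkcstrip k a b i}. s (lam b) n)) c"
    by (simp add: lincomb_ind)
  also have "\<dots> = lincomb (\<lambda>a. sym_hmul i (s (lam a))) c"
  proof (rule lincomb_cong)
    fix a assume "a \<in> fsupp c"
    then have a: "kcomp k a" using fc(2) by auto
    show "(\<lambda>n. \<Sum>b\<in>{b. hkcstrip k a b i}. s (lam b) n) = sym_hmul i (s (lam a))"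
      unfolding s_pieri[OF i kbpart_lam[OF a]]
      using sum.reindex_bij_betw[OF hkc_bij[OF a], of "\<lambda>m. s m n" for n] by simp
  qed
  also have "\<dots> = sym_hmul i (lincomb (\<lambda>b. s (lam b)) c)"
    by (rule sym_hmul_lincomb[symmetric, OF fc(1)]) (use fc(2) fin_s kbpart_lam in auto)
  also have "lincomb (\<lambda>b. s (lam b)) c = sig F" unfolding sig_def c_def ..
  finally show ?thesis .
qed

lemma chi_sig_E: "kcomp k g \<Longrightarrow> chi (E g) = sig (E g)"
proof (induction g)
  case Nil
  have "NS [] = E []" using nk one_vec_E unfolding is_ncschur_def by simp
  moreover have "s [] = E []" using ks one_vec_E unfolding is_kschur_def by simp
  ultimately show ?case using sig_NS[OF Nil] by (simp add: chi_E lam_def)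
next
  case (Cons i g)
  then have i: "i \<in> {1..k}" and g: "kcomp k g" unfolding kcomp_def by auto
  have "chi (E (i # g)) = sym_hmul i (chi (E g))" by (simp add: chi_nsym nsym_hmul_E[symmetric])
  also have "\<dots> = sym_hmul i (sig (E g))" using Cons.IH[OF g] by simp
  also have "\<dots> = sig (nsym_hmul i (E g))" by (rule sig_hmul[symmetric, OF E_fspace i]) (simp add: g)
  finally show ?case by (simp add: nsym_hmul_E)
qed

lemma chi_sig: assumes F: "F \<in> fspace {a. kcomp k a}" shows "chi F = sig F"
proof -
  have fF: "finite (fsupp F)" "fsupp F \<subseteq> {a. kcomp k a}" using F unfolding fspace_def by auto
  have "chi F = chi (lincomb E F)" using lincomb_self[OF fF(1)] by simp
  also have "\<dots> = lincomb (\<lambda>g. chi (E g)) F" by (rule chi_lincomb) (simp_all add: fF)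
  also have "\<dots> = lincomb (\<lambda>g. sig (E g)) F" by (rule lincomb_cong) (use fF chi_sig_E in auto)
  also have "\<dots> = sig (lincomb E F)" by (rule sig_lincomb[symmetric, OF fF(1)]) (use fF(2) in \<open>auto intro!: E_fspace\<close>)
  also have "\<dots> = sig F" using lincomb_self[OF fF(1)] by simp
  finally show ?thesis .
qed

lemma chi_NS: "kcomp k a \<Longrightarrow> chi (NS a) = s (lam a)"
  using chi_sig[OF NS_fspace] sig_NS by simp

lemma final:
  assumes la: "kbpart k la"
  shows "sym_to_qsym k (dS la) = (\<lambda>g. \<Sum>a\<in>{a. kcomp k a \<and> lam a = la}. QS a g)"
proof (rule ext)
  fix g
  let ?T = "{a. kcomp k a \<and> lam a = la}"
  have QSf: "QS a \<in> fspace {a. kcomp k a}" if "kcomp k a" for a using dn that unfolding is_dual_basis_def by simp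
  show "sym_to_qsym k (dS la) g = (\<Sum>a\<in>?T. QS a g)"
  proof (cases "kcomp k g")
    case False
    have "QS a g = 0" if "a \<in> ?T" for a using QSf[of a] that False unfolding fspace_def fsupp_def by auto
    then show ?thesis using False by (simp add: sym_to_qsym_def)
  next
    case True
    have dSf: "dS la \<in> fspace {la. kbpart k la}" using dk la unfolding is_dual_basis_def by simp
    then have fdS: "finite (fsupp (dS la))" unfolding fspace_def by simp
    define c where "c = coef {a. kcomp k a} QS (E g)"
    have c: "c \<in> fspace {a. kcomp k a}" "E g = lincomb NS c"
      using coef_repr[OF NS_basis dn E_fspace[of g]] True unfolding c_def by auto
    have fc: "finite (fsupp c)" "fsupp c \<subseteq> {a. kcomp k a}" using c(1) unfolding fspace_def by auto
    have cv: "c b = QS b g" if "kcomp k b" for b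
      using that QSf[OF that] unfolding c_def coef_def by (simp add: pair_E_right fspace_def)
    have fT: "finite ?T"
    proof (rule finite_subset)
      show "?T \<subseteq> {xs. set xs \<subseteq> {1..k} \<and> length xs = length la}"
        by (auto simp: kcomp_def length_lam)
      show "finite {xs. set xs \<subseteq> {1..k} \<and> length xs = length la}" by (rule finite_lists_length_eq) simp
    qed
    have "sym_to_qsym k (dS la) g = dS la (lam g)" using True by (simp add: sym_to_qsym_def)
    also have "\<dots> = pair (dS la) (chi (E g))" by (simp add: chi_E pair_E_right[OF fdS])
    also have "chi (E g) = lincomb (\<lambda>b. s (lam b)) c"
    proof -
      have "chi (E g) = lincomb (\<lambda>b. chi (NS b)) c" unfolding c(2)
        by (rule chi_lincomb[OF fc(1)]) (use fc NS_fspace in \<open>auto simp: fspace_def\<close>)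
      also have "\<dots> = lincomb (\<lambda>b. s (lam b)) c" by (rule lincomb_cong) (use fc chi_NS in auto)
      finally show ?thesis .
    qed
    also have "pair (dS la) (lincomb (\<lambda>b. s (lam b)) c) = (\<Sum>b\<in>fsupp c. c b * pair (dS la) (s (lam b)))"
      by (rule pair_lincomb_right)
    also have "\<dots> = (\<Sum>b\<in>fsupp c. c b * (if la = lam b then 1 else 0))"
      by (rule sum.cong[OF refl]) (use dk la fc(2) kbpart_lam in \<open>auto simp: is_dual_basis_def\<close>)
    also have "\<dots> = (\<Sum>b\<in>fsupp c \<union> ?T. c b * (if la = lam b then 1 else 0))"
      by (rule sum_fsupp_superset) (use fc fT in auto)
    also have "\<dots> = (\<Sum>b\<in>?T. c b * (if la = lam b then 1 else 0))"
      by (rule sum.mono_neutral_right) (use fc fT in auto)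
    also have "\<dots> = (\<Sum>b\<in>?T. QS b g)" by (rule sum.cong[OF refl]) (auto simp: cv)
    finally show ?thesis .
  qed
qed

end


theorem mainTheorem8:
  fixes k :: nat
    and s dS :: "nat list \<Rightarrow> nat list \<Rightarrow> rat"
    and NS QS :: "nat list \<Rightarrow> nat list \<Rightarrow> rat"
  assumes "k \<ge> 1"
    and "is_kschur k s"
    and "is_dual_basis {la. kbpart k la} s dS"
    and "is_ncschur k NS"
    and "is_dual_basis {\<alpha>. kcomp k \<alpha>} NS QS"
    and "kbpart k la"
  shows "sym_to_qsym k (dS la) = (\<lambda>\<gamma>. \<Sum>\<alpha>\<in>{\<alpha>. kcomp k \<alpha> \<and> lam \<alpha> = la}. QS \<alpha> \<gamma>)"
proof -
  interpret setting k s dS NS QS using assms(2-5) by unfold_locales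
  show ?thesis by (rule final[OF assms(6)])
qed

end
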